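(* For $\beta\in\mathbb{N}$, $n\in\mathbb{N}$, $r\in\mathbb{Z}$ let $$T_{0,\beta}^{(2)}(n,r)=\frac{1}{\lfloor n/2^{\beta-1}\rfloor!}\sum_{k\equiv r\ (\mathrm{mod}\ 2^{\beta})}\binom nk(-1)^k.$$ Let $\alpha\in\mathbb{N}$, $n\in\mathbb{Z}^+$, $r\in\mathbb{Z}$ with $n\equiv r\equiv0\pmod{2^{\alpha}}$. Then $T_{0,\alpha+1}^{(2)}(n,r)\equiv1\pmod 2$ if and only if $n$ is a power of $2$.
   Context: The sum runs over all integers $k\equiv r\pmod{2^\beta}$ with $\binom nk=0$ unless $0\le k\le n$. For rationals $u,v$, $u\equiv v\pmod 2$ means $\operatorname{ord}_2(u-v)\ge1$. *)

theory Defs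
  imports Complex_Main "HOL-Number_Theory.Cong"
begin

text \<open>T^{(2)}_{0,beta}(n,r) = 1/floor(n/2^(beta-1))! * sum over k = r (mod 2^beta), 0 <= k <= n,
  of (n choose k) (-1)^k.  Only used with beta >= 1, where n div 2^(beta-1) is the floor.\<close>
definition T02 :: "nat \<Rightarrow> nat \<Rightarrow> int \<Rightarrow> rat" where
  "T02 beta n r =
     (\<Sum>k\<in>{k. k \<le> n \<and> [int k = r] (mod (2 ^ beta))}. of_nat (n choose k) * (-1) ^ k)
     / of_nat (fact (n div 2 ^ (beta - 1)))"

text \<open>u = v (mod 2) for rationals: ord_2(u - v) >= 1, i.e. u - v = 2a/b with b odd
  (this includes u = v).\<close>
definition rat_cong2 :: "rat \<Rightarrow> rat \<Rightarrow> bool" where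
  "rat_cong2 u v \<longleftrightarrow> (\<exists>a b :: int. odd b \<and> u - v = of_int (2 * a) / of_int b)"

end

theory Submission
  imports Defs "HOL-Computational_Algebra.Polynomial"
begin



lemma coeff_onem_pow:
  "coeff ([:1, -1:] ^ n :: int poly) k = (-1) ^ k * int (n choose k)"
proof (induction n arbitrary: k)
  case 0 then show ?case by (cases k) auto
next
  case (Suc n)
  have e: "[:1, -1:] ^ Suc n = [:1,-1:]^n - pCons 0 ([:1,-1:]^n :: int poly)"
    by (simp add: algebra_simps)
  show ?case
  proof (cases k)
    case 0 then show ?thesis using Suc by (simp add: e)
  next
    case (Suc j) then show ?thesis using Suc.IH by (simp add: e algebra_simps)
  qed
qed

lemma sq_step:
  fixes u h z :: "'a::comm_ring_1"
  assumes uu: "u * u = 2 * u + z" and m: "m \<ge> 1"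
  shows "\<exists>Q. (u + 2*h)^m = 2^(m-1) * (2*h^m + u*((1+h)^m - h^m)) + z * Q"
  using m
proof (induction m rule: dec_induct)
  case base then show ?case by (rule exI[of _ 0]) simp
next
  case (step m)
  then obtain Q where Q: "(u + 2*h)^m = 2^(m-1) * (2*h^m + u*((1+h)^m - h^m)) + z * Q" by blast
  have p: "(2::'a)^m = 2 * 2^(m-1)" using step(1) by (cases m) auto
  have "(u + 2*h)^Suc m = (u+2*h) * (2^(m-1) * (2*h^m + u*((1+h)^m - h^m))) + z * ((u+2*h)*Q)"
    by (subst power_Suc, subst Q, simp add: algebra_simps)
  also have "(u+2*h) * (2^(m-1) * (2*h^m + u*((1+h)^m - h^m))) =
     2^(m-1) * (2*u*h^m + (u*u)*((1+h)^m - h^m) + 4*h*h^m + 2*u*h*((1+h)^m - h^m))"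
    by (simp add: algebra_simps)
  also have "\<dots> = 2^(m-1) * (2*u*h^m + (2*u)*((1+h)^m - h^m) + 4*h*h^m + 2*u*h*((1+h)^m - h^m))
        + z * (2^(m-1) * ((1+h)^m - h^m))"
    by (simp add: uu algebra_simps)
  also have "2^(m-1) * (2*u*h^m + (2*u)*((1+h)^m - h^m) + 4*h*h^m + 2*u*h*((1+h)^m - h^m))
     = 2^(Suc m - 1) * (2*h^Suc m + u*((1+h)^Suc m - h^Suc m))"
    by (simp add: p algebra_simps)
  finally have "(u + 2*h)^Suc m = 2^(Suc m - 1) * (2*h^Suc m + u*((1+h)^Suc m - h^Suc m))
     + (z * (2^(m-1) * ((1+h)^m - h^m)) + z * ((u+2*h)*Q))" by (simp add: algebra_simps)
  then show ?case by (metis distrib_left)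
qed

lemma sq_gen2:
  fixes y E :: "'a::comm_ring_1"
  shows "(1 + y + 2*E)^2 = 1 + y*y + 2*(y + 2*E + 2*E*y + 2*E*E)"
  by (simp add: power2_eq_square algebra_simps)

lemma frob2:
  fixes h :: "'a::comm_ring_1"
  shows "\<exists>E. (1+h)^(2^t) = 1 + h^(2^t) + 2*E"
proof (induction t)
  case 0 then show ?case by (rule exI[of _ 0]) simp
next
  case (Suc t)
  then obtain E where E: "(1+h)^(2^t) = 1 + h^(2^t) + 2*E" by blast
  have "(1+h)^(2^Suc t) = ((1+h)^(2^t))^2" by (simp add: power_mult[symmetric] mult.commute)
  also have "\<dots> = (1 + h^(2^t) + 2*E)^2" by (simp only: E)
  also have "\<dots> = 1 + h^(2^t)*h^(2^t) + 2*(h^(2^t) + 2*E + 2*E*h^(2^t) + 2*E*E)"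
    by (rule sq_gen2)
  also have "h^(2^t)*h^(2^t) = h^(2^Suc t)" by (simp add: power_add[symmetric] mult_2)
  finally show ?case by blast
qed

lemma sq_gen:
  fixes x y h :: "'a::comm_ring_1"
  assumes "x * x = y"
  shows "(1 - x + 2*h)^2 = 1 - y + 2*(y - x + 2*(1 - x)*h + 2*h*h)"
  using assms by (simp add: power2_eq_square algebra_simps)

lemma onem_pow2:
  "\<exists>h. ([:1,-1:] :: int poly)^(2^a) = 1 - monom 1 (2^a) + 2*h"
proof (induction a)
  case 0 then show ?case by (rule exI[of _ 0]) (simp add: monom_altdef one_pCons)
next
  case (Suc a)
  then obtain h where h: "([:1,-1:] :: int poly)^(2^a) = 1 - monom 1 (2^a) + 2*h" by blast
  have mm: "monom (1::int) (2^a) * monom 1 (2^a) = monom 1 (2^Suc a)"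
    by (simp add: mult_monom mult_2)
  have "([:1,-1:] :: int poly)^(2^Suc a) = (([:1,-1:] :: int poly)^(2^a))^2"
    by (simp add: power_mult[symmetric] mult.commute)
  also have "\<dots> = (1 - monom 1 (2^a) + 2*h)^2" by (simp only: h)
  also have "\<dots> = 1 - monom 1 (2^Suc a) + 2*(monom 1 (2^Suc a) - monom 1 (2^a) + 2*(1 - monom 1 (2^a))*h + 2*h*h)"
    by (rule sq_gen[OF mm])
  finally show ?case by blast
qed



definition L :: "nat \<Rightarrow> nat \<Rightarrow> int poly \<Rightarrow> int" where
  "L M c p = (\<Sum>k<Suc (degree p). if k mod M = c then coeff p k else 0)"

lemma L_bound:
  assumes "degree p < D"
  shows "L M c p = (\<Sum>k<D. if k mod M = c then coeff p k else 0)"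
  unfolding L_def
proof (rule sum.mono_neutral_left)
  show "\<forall>i\<in>{..<D} - {..<Suc (degree p)}. (if i mod M = c then coeff p i else 0) = 0"
    by (auto simp: coeff_eq_0)
qed (use assms in auto)

lemma L_add: "L M c (p + q) = L M c p + L M c q"
proof -
  define D where "D = Suc (max (degree p) (degree q))"
  have d: "degree (p+q) < D" using degree_add_le_max[of p q] unfolding D_def by linarith
  have dp: "degree p < D" "degree q < D" unfolding D_def by auto
  show ?thesis
    unfolding L_bound[OF d] L_bound[OF dp(1)] L_bound[OF dp(2)]
    by (subst sum.distrib[symmetric], rule sum.cong, simp_all)
qed

lemma L_smult: "L M c (smult a p) = a * L M c p"
proof -
  have d: "degree (smult a p) < Suc (degree p)" by (simp add: le_imp_less_Suc)
  have d2: "degree p < Suc (degree p)" by simp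
  show ?thesis unfolding L_bound[OF d] L_bound[OF d2]
    by (subst sum_distrib_left, rule sum.cong, simp_all)
qed

lemma L_uminus: "L M c (- p) = - L M c p"
  using L_smult[of M c "-1" p] by simp

lemma L_diff: "L M c (p - q) = L M c p - L M c q"
  using L_add[of M c p "-q"] L_uminus[of M c q] by simp

lemma pow2_mult: "((2::int poly)^k) * p = smult (2^k) p"
  by (induction k) (simp_all add: numeral_mult_conv_smult mult.assoc)

lemma two_mult: "(2::int poly) * p = smult 2 p"
  using pow2_mult[of 1 p] by simp

lemma L_shift:
  assumes "M > 0"
  shows "L M c (monom 1 M * q) = L M c q"
proof -
  define D where "D = Suc (degree q)"
  have "degree (monom 1 M * q) \<le> M + degree q"
    using degree_mult_le[of "monom (1::int) M" q] degree_monom_le[of "1::int" M] by linarith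
  then have d: "degree (monom 1 M * q) < D + M" unfolding D_def by linarith
  have "L M c (monom 1 M * q) = (\<Sum>k<D + M. if k mod M = c then coeff (monom 1 M * q) k else 0)"
    by (rule L_bound[OF d])
  also have "{..<D + M} = {0..<M} \<union> {0 + M..<D + M}" by auto
  also have "(\<Sum>k\<in>{0..<M} \<union> {0 + M..<D + M}. if k mod M = c then coeff (monom 1 M * q) k else 0) = (\<Sum>k\<in>{0..<M}. if k mod M = c then coeff (monom 1 M * q) k else 0)
     + (\<Sum>k\<in>{0 + M..<D + M}. if k mod M = c then coeff (monom 1 M * q) k else 0)"
    by (rule sum.union_disjoint) auto
  also have "(\<Sum>k\<in>{0..<M}. if k mod M = c then coeff (monom 1 M * q) k else 0) = 0"
    by (rule sum.neutral) (simp add: coeff_monom_mult)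
  also have "(\<Sum>k\<in>{0 + M..<D + M}. if k mod M = c then coeff (monom 1 M * q) k else 0)
     = (\<Sum>k\<in>{0..<D}. if (k + M) mod M = c then coeff (monom 1 M * q) (k + M) else 0)"
    by (rule sum.shift_bounds_nat_ivl)
  also have "\<dots> = (\<Sum>k<D. if k mod M = c then coeff q k else 0)"
    by (rule sum.cong) (auto simp add: coeff_monom_mult atLeast0LessThan)
  also have "\<dots> = L M c q" by (rule L_bound[symmetric]) (simp add: D_def)
  finally show ?thesis by simp
qed

lemma L_kill:
  assumes "M > 0"
  shows "L M c ((monom 1 M - 1) * Q) = 0"
proof -
  have "(monom 1 M - 1) * Q = monom 1 M * Q - Q" by (simp add: left_diff_distrib)
  then show ?thesis by (simp add: L_diff L_shift[OF assms])
qed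

lemma L_monom:
  assumes "c < M" "N < M"
  shows "L M c (monom 1 N) = (if c = N then 1 else 0)"
proof -
  have "L M c (monom 1 N) = (\<Sum>k<Suc N. if k mod M = c then coeff (monom 1 N) k else 0)"
    by (rule L_bound) (simp add: degree_monom_eq le_imp_less_Suc)
  also have "\<dots> = (\<Sum>k<Suc N. if k = N then (if c = N then 1 else 0) else 0)"
    by (rule sum.cong) (use assms in \<open>auto simp: coeff_monom\<close>)
  also have "\<dots> = (if c = N then 1 else 0)" by simp
  finally show ?thesis .
qed

lemma L_one:
  assumes "c < M"
  shows "L M c 1 = (if c = 0 then 1 else 0)"
proof -
  have "(1::int poly) = monom 1 0" by simp
  moreover have "0 < M" using assms by simp
  ultimately show ?thesis using L_monom[of c M 0] assms by metis
qed



lemma fact_double: "fact (2*k) = (2::nat)^k * fact k * (\<Prod>i<k. 2*i+1)"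
proof (induction k)
  case 0 then show ?case by simp
next
  case (Suc k)
  have "fact (2 * Suc k) = (2*k+2) * ((2*k+1) * (fact (2*k) :: nat))"
    by (simp add: fact_Suc algebra_simps)
  also have "\<dots> = (2*k+2) * ((2*k+1) * ((2::nat)^k * fact k * (\<Prod>i<k. 2*i+1)))"
    by (simp only: Suc)
  also have "\<dots> = (2::nat)^Suc k * fact (Suc k) * (\<Prod>i<Suc k. 2*i+1)"
    by (simp add: fact_Suc algebra_simps)
  finally show ?case .
qed

lemma odd_prod: "odd (\<Prod>i<k. 2*i+1 :: nat)"
  by (induction k) auto

lemma pow2_double: "(\<exists>t. 2*k = (2::nat)^t) \<longleftrightarrow> (\<exists>t. k = (2::nat)^t)"
proof
  assume "\<exists>t. 2*k = (2::nat)^t"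
  then obtain t where t: "2*k = (2::nat)^t" by blast
  show "\<exists>t. k = (2::nat)^t"
  proof (cases t)
    case 0 then show ?thesis using t by simp
  next
    case (Suc s) then show ?thesis using t by auto
  qed
next
  assume "\<exists>t. k = (2::nat)^t"
  then obtain t where "k = 2^t" by blast
  then have "2*k = 2^Suc t" by simp
  then show "\<exists>t. 2*k = (2::nat)^t" by blast
qed

lemma fact_2adic:
  "m \<ge> 1 \<Longrightarrow> \<exists>a (q::nat). odd q \<and> (fact m :: nat) = 2^a * q \<and> a + 1 \<le> m \<and> (a + 1 = m \<longleftrightarrow> (\<exists>t. m = (2::nat)^t))"
proof (induction m rule: less_induct)
  case (less m)
  show ?case
  proof (cases "m = 1")
    case True then show ?thesis by (intro exI[of _ 0] exI[of _ 1]) (auto intro: exI[of _ 0])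
  next
    case False
    then have m2: "m \<ge> 2" using less.prems by simp
    obtain k where k: "m = 2*k \<or> m = 2*k+1" by (metis oddE evenE)
    have k1: "k \<ge> 1" "k < m" using k m2 by auto
    obtain a q where ao: "odd q" "(fact k :: nat) = 2^a * q" "a + 1 \<le> k" "a + 1 = k \<longleftrightarrow> (\<exists>t. k = (2::nat)^t)"
      using less.IH[OF k1(2) k1(1)] by blast
    have fd: "fact (2*k) = (2::nat)^(k+a) * (q * (\<Prod>i<k. 2*i+1))"
      unfolding fact_double ao(2) by (simp add: power_add algebra_simps)
    from k show ?thesis
    proof
      assume mk: "m = 2*k"
      show ?thesis
        apply (rule exI[of _ "k+a"], rule exI[of _ "q * (\<Prod>i<k. 2*i+1)"])
        using ao odd_prod[of k] fd mk pow2_double[of k] by auto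
    next
      assume mk: "m = 2*k+1"
      have np: "\<not> (\<exists>t. m = (2::nat)^t)"
      proof
        assume "\<exists>t. m = (2::nat)^t"
        then obtain t where t: "m = 2^t" by blast
        show False
        proof (cases t)
          case 0 then show False using t mk k1 by simp
        next
          case (Suc s) then have "m = 2*2^s" using t by simp
          then show False using mk by presburger
        qed
      qed
      have "fact m = (2::nat)^(k+a) * ((2*k+1) * (q * (\<Prod>i<k. 2*i+1)))"
        using fd mk by (simp add: fact_Suc algebra_simps)
      moreover have "k + a + 1 \<noteq> m" "k + a + 1 \<le> m" using ao(3) mk by simp_all
      moreover have "odd ((2*k+1) * (q * (\<Prod>i<k. 2*i+1)))" using ao(1) odd_prod[of k] by simp
      ultimately show ?thesis using np by blast
    qed
  qed
qed



lemma sum_conv: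
  fixes n M c :: nat and r :: int
  assumes M: "M = 2^Suc alpha" and c: "c = nat (r mod int M)"
  shows "(\<Sum>k\<in>{k. k \<le> n \<and> [int k = r] (mod (2 ^ Suc alpha))}. of_nat (n choose k) * (-1) ^ k :: rat)
     = of_int (L M c ([:1,-1:]^n))"
proof -
  have Mp: "M > 0" using M by simp
  have set: "{k. k \<le> n \<and> [int k = r] (mod (2 ^ Suc alpha))} = {k. k \<le> n \<and> k mod M = c}"
  proof -
    have "[int k = r] (mod (2 ^ Suc alpha)) \<longleftrightarrow> k mod M = c" for k
    proof -
      have "[int k = r] (mod (2 ^ Suc alpha)) \<longleftrightarrow> int k mod int M = r mod int M"
        by (simp add: cong_def M)
      also have "\<dots> \<longleftrightarrow> int (k mod M) = r mod int M" by (simp add: zmod_int)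
      also have "\<dots> \<longleftrightarrow> k mod M = c" using Mp c by auto
      finally show ?thesis .
    qed
    then show ?thesis by auto
  qed
  have deg: "degree ([:1,-1:]^n :: int poly) < Suc n"
    using degree_power_le[of "[:1,-1:] :: int poly" n] by simp
  have "L M c ([:1,-1:]^n) = (\<Sum>k<Suc n. if k mod M = c then (-1)^k * int (n choose k) else 0)"
    unfolding L_bound[OF deg] by (rule sum.cong[OF refl]) (simp only: coeff_onem_pow)
  also have "\<dots> = (\<Sum>k\<in>{k. k \<le> n \<and> k mod M = c}. (-1)^k * int (n choose k))"
    by (rule sum.mono_neutral_cong_right) auto
  finally show ?thesis unfolding set by (simp add: mult.commute)
qed



lemma uu_gen:
  fixes x y :: "'a::comm_ring_1"
  assumes "x * x = y"
  shows "(1 - x) * (1 - x) = 2 * (1 - x) + (y - 1)"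
  using assms by (simp add: algebra_simps)

lemma Bgen:
  fixes u h y E :: "'a::comm_ring_1"
  shows "2*y + u*((1 + y + 2*E) - y) = u + 2*(y + u*E)"
  by (simp add: algebra_simps)

theorem lemma4p2:
  fixes alpha n :: nat and r :: int
  assumes "n > 0" and "2 ^ alpha dvd n" and "(2::int) ^ alpha dvd r"
  shows "rat_cong2 (T02 (Suc alpha) n r) 1 \<longleftrightarrow> (\<exists>m::nat. n = 2 ^ m)"
proof -
  define N :: nat where "N = 2^alpha"
  define M :: nat where "M = 2^Suc alpha"
  define m where "m = n div N"
  define c where "c = nat (r mod int M)"
  have Np: "N > 0" by (simp add: N_def)
  have MN: "M = 2*N" by (simp add: M_def N_def)
  have Mp: "M > 0" by (simp add: M_def)
  have nm: "n = N * m" using assms(2) by (simp add: m_def N_def)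
  have m1: "m \<ge> 1" using nm assms(1) by (cases m) auto
  have cM: "c < M"
  proof -
    have "r mod int M < int M" "0 \<le> r mod int M" using Np MN by simp_all
    then show ?thesis by (simp add: c_def)
  qed
  have c0N: "c = 0 \<or> c = N"
  proof -
    have NM: "(2::int)^alpha dvd int M" by (simp add: M_def)
    have d0: "(2::int)^alpha dvd r mod int M" using assms(3) dvd_mod_iff[OF NM] by simp
    have d: "int N dvd r mod int M" using d0 by (simp add: N_def)
    then obtain j where j: "r mod int M = int N * j" by blast
    have b: "0 \<le> r mod int M" "r mod int M < 2 * int N" using Np MN by simp_all
    have "0 \<le> j" using b(1) j Np by (simp add: zero_le_mult_iff)
    moreover have "j < 2" using b(2) j Np by (simp add: mult.commute)
    ultimately have "j = 0 \<or> j = 1" by auto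
    then show ?thesis using j by (auto simp: c_def)
  qed
  have pow_iff: "(\<exists>t. n = 2^t) \<longleftrightarrow> (\<exists>t. m = (2::nat)^t)"
  proof
    assume "\<exists>t. n = 2^t"
    then obtain t where t: "n = 2^t" by blast
    then have "m dvd 2^t" using nm by (metis dvd_triv_right)
    then show "\<exists>t. m = (2::nat)^t" using divides_primepow_nat[of 2 m t] by auto
  next
    assume "\<exists>t. m = (2::nat)^t"
    then obtain t where "m = 2^t" by blast
    then have "n = 2^(alpha + t)" using nm by (simp add: N_def power_add)
    then show "\<exists>t. n = 2^t" by blast
  qed
  define u :: "int poly" where "u = 1 - monom 1 N"
  define z :: "int poly" where "z = monom 1 M - 1"
  obtain h where h: "([:1,-1:] :: int poly)^N = u + 2*h"
    using onem_pow2[of alpha] unfolding u_def N_def by (auto simp: algebra_simps)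
  have mm: "monom (1::int) N * monom 1 N = monom 1 M" by (simp add: mult_monom MN mult_2)
  have uu: "u * u = 2 * u + z"
    unfolding u_def z_def by (rule uu_gen[OF mm])
  obtain Q where Q: "(u + 2*h)^m = 2^(m-1) * (2*h^m + u*((1+h)^m - h^m)) + z * Q"
    using sq_step[OF uu m1] by blast
  define B where "B = 2*h^m + u*((1+h)^m - h^m)"
  define l where "l = L M c B"
  have "([:1,-1:] :: int poly)^n = 2^(m-1) * B + z * Q"
    using Q by (simp add: nm power_mult h B_def)
  then have S: "L M c ([:1,-1:]^n) = 2^(m-1) * l"
    by (simp add: L_add pow2_mult L_smult z_def L_kill[OF Mp] l_def)
  obtain a q where aq: "odd q" "(fact m :: nat) = 2^a * q" "a + 1 \<le> m"
     "a + 1 = m \<longleftrightarrow> (\<exists>t. m = (2::nat)^t)"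
    using fact_2adic[OF m1] by blast
  have T: "T02 (Suc alpha) n r = of_int (2^(m-1) * l) / (of_int (2^a * int q))"
  proof -
    have dm: "n div 2 ^ (Suc alpha - 1) = m" by (simp add: m_def N_def)
    have f: "(of_nat (fact (n div 2 ^ (Suc alpha - 1))) :: rat) = of_int (2^a * int q)"
      unfolding dm aq(2) by simp
    show ?thesis unfolding T02_def f sum_conv[OF M_def c_def, of n] S ..
  qed
  have qpos: "int q \<noteq> 0" using aq(1) by (metis even_zero of_nat_eq_0_iff)
  show ?thesis
  proof (cases "\<exists>t. m = (2::nat)^t")
    case True
    then obtain t where t: "m = 2^t" by blast
    obtain E where E: "(1+h)^m = 1 + h^m + 2*E" using frob2[of h t] t by blast
    have "B = u + 2*(h^m + u*E)" unfolding B_def E by (rule Bgen)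
    then have "l = L M c u + 2 * L M c (h^m + u*E)"
      by (simp add: l_def L_add two_mult L_smult)
    moreover have "odd (L M c u)"
      using c0N cM Np MN by (auto simp: u_def L_diff L_one L_monom)
    ultimately have lodd: "odd l" by simp
    have a: "a = m - 1" using aq(4) True by simp
    have T1: "T02 (Suc alpha) n r = of_int l / of_int (int q)"
      unfolding T a using qpos by (simp add: of_int_mult)
    have "even (l - int q)" using lodd aq(1) by simp
    then obtain A where A: "l - int q = 2 * A" by blast
    have "T02 (Suc alpha) n r - 1 = of_int (2 * A) / of_int (int q)"
      unfolding T1 A[symmetric] using qpos by (simp add: field_simps)
    moreover have "odd (int q)" using aq(1) by simp
    ultimately have "rat_cong2 (T02 (Suc alpha) n r) 1" unfolding rat_cong2_def by blast
    then show ?thesis using True pow_iff by simp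
  next
    case False
    have am: "a + 1 < m" using aq(3) aq(4) False by auto
    define e where "e = m - 1 - a"
    have e1: "e \<ge> 1" using am by (simp add: e_def)
    have pe: "(2::int)^(m-1) = 2^a * 2^e" using am by (simp add: e_def power_add[symmetric])
    have T2: "T02 (Suc alpha) n r = of_int (2^e * l) / of_int (int q)"
      unfolding T pe by (simp add: of_int_mult)
    have "\<not> rat_cong2 (T02 (Suc alpha) n r) 1"
    proof
      assume "rat_cong2 (T02 (Suc alpha) n r) 1"
      then obtain A b :: int where b: "odd b" and Ab: "T02 (Suc alpha) n r - 1 = of_int (2 * A) / of_int b"
        unfolding rat_cong2_def by blast
      have b0: "b \<noteq> 0" using b by auto
      have "of_int (b * (2^e * l - int q)) = (of_int (2 * A * int q) :: rat)"
        using Ab unfolding T2 using b0 qpos by (simp add: field_simps)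
      then have eq: "b * (2^e * l - int q) = 2 * A * int q" by (simp only: of_int_eq_iff)
      have "odd (b * (2^e * l - int q))" using b aq(1) e1 by simp
      then show False unfolding eq by simp
    qed
    then show ?thesis using False pow_iff by simp
  qed
qed


end
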